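(* Let $A\in\mathbb{R}^{m\times n}$, $b\in\mathbb{R}^m$ with $Ax=b$ consistent, and let $(\Omega,\mathcal{F},\mathbf{P})$ be a probability space of matrices $S\in\mathbb{R}^{m\times q}$ such that $\mathbb{E}[SS^\top]$ is positive definite. Let $H=\mathbb{E}\big[\frac{SS^\top}{\|S^\top A\|_2^2}\big]$ (with the convention $\frac00=0$), and let $\{x^k\}_{k\ge0}$ be generated by the RIM-AS algorithm described in the context. Then for each $k$, $$\mathbb{E}_{S_k\in\Omega}\big[\|x^{k+1}-A^\dagger b\|_2^2\mid x^k\big]\le\big(1-q_k\,\sigma_{\min}^2(H^{1/2}A)\big)\,\|x^k-A^\dagger b\|_2^2,$$ where $q_k$ is defined in the context.
   Context: $A^\dagger$ is the Moore–Penrose pseudoinverse; $\sigma_{\min}(B)$ is the smallest nonzero singular value of $B$; $V^\dagger$ is the pseudoinverse of $V$. RIM-AS algorithm: fix a positive integer $\ell$ and $x^0\in\operatorname{Range}(A^\top)$. For $k=0,1,2,\dots$: (1) randomly draw $S_k\in\Omega$ according to $\mathbf{P}$ (redrawing until $S_k^\top(Ax^k-b)\neq0$); (2) set $j_k=\max\{k-\ell+1,0\}$ and $M_k=(x^{j_k}-x^k,\dots,x^{k-1}-x^k,-A^\top S_kS_k^\top(Ax^k-b))\in\mathbb{R}^{n\times(k-j_k+1)}$; (3) set $\gamma_k=\|S_k^\top(Ax^k-b)\|_2^2$ and let $s_k$ solve $M_k^\top M_ks_k=\gamma_k e$, where $e$ is the last standard unit vector of $\mathbb{R}^{k-j_k+1}$;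 (4) set $x^{k+1}=x^k+M_ks_k$. (Equivalently, $x^{k+1}$ is the orthogonal projection of $A^\dagger b$ onto $x^k+\operatorname{Range}(M_k)$.) Define $V_0=\emptyset$ (so $V_0V_0^\dagger=0$) and $V_k=(x^{j_k}-x^k,\dots,x^{k-1}-x^k)$ for $k\ge1$, $d_k=-A^\top S_kS_k^\top(Ax^k-b)$, $\mathcal{Q}_k=\{S\in\Omega: S^\top(Ax^k-b)\neq0\}$, and $$q_k=\inf_{S_k\in\mathcal{Q}_k}\Big(1-\frac{\|V_kV_k^\dagger d_k\|_2^2}{\|d_k\|_2^2}\Big)^{-1}\ (\ge1).$$ The expectation is over the random choice of $S_k$ given $x^k$. *)

theory Defs
  imports "HOL-Probability.Probability"
begin

text \<open>Moore--Penrose pseudoinverse of a (type-dimensioned) real matrix, via the Penrose conditions.\<close>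
definition pinv :: "real^'n^'m \<Rightarrow> real^'m^'n" where
  "pinv A = (THE X. A ** X ** A = A \<and> X ** A ** X = X \<and>
                   transpose (A ** X) = A ** X \<and> transpose (X ** A) = X ** A)"

text \<open>Orthogonal projection onto span U (this is V V^dagger when U is the set of columns of V).\<close>
definition proj_span :: "('a::euclidean_space) set \<Rightarrow> 'a \<Rightarrow> 'a" where
  "proj_span U d = (THE p. p \<in> span U \<and> (\<forall>u\<in>U. (d - p) \<bullet> u = 0))"

definition pos_def_mat :: "real^'n^'n \<Rightarrow> bool" where
  "pos_def_mat B \<longleftrightarrow> (\<forall>v. v \<noteq> 0 \<longrightarrow> v \<bullet> (B *v v) > 0)"

text \<open>Principal (symmetric positive semidefinite) square root.\<close>
definition msqrt :: "real^'n^'n \<Rightarrow> real^'n^'n" where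
  "msqrt H = (THE R. transpose R = R \<and> (\<forall>v. 0 \<le> v \<bullet> (R *v v)) \<and> R ** R = H)"

text \<open>Smallest nonzero singular value: singular values are the square roots of the eigenvalues of B^T B.\<close>
definition sigma_min :: "real^'n^'m \<Rightarrow> real" where
  "sigma_min B = Inf {\<sigma>. \<sigma> > 0 \<and> (\<exists>v. v \<noteq> 0 \<and> (transpose B ** B) *v v = scaleR (\<sigma>^2) v)}"

text \<open>Spectral norm of a matrix.\<close>
definition spec_norm :: "real^'n^'m \<Rightarrow> real" where
  "spec_norm B = onorm (\<lambda>x. B *v x)"

text \<open>H = E[ S S^T / ||S^T A||_2^2 ] (division by zero gives zero in HOL, matching 0/0 = 0).\<close>
definition Hmat :: "(real^'q^'m) measure \<Rightarrow> real^'n^'m \<Rightarrow> real^'m^'m" where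
  "Hmat M A = integral\<^sup>L M (\<lambda>S. scaleR (1 / (spec_norm (transpose S ** A))^2) (S ** transpose S))"

text \<open>RIM-AS ingredients, given the history xs = [x^0, ..., x^k] and the drawn S.\<close>
definition rim_V :: "nat \<Rightarrow> (real^'n) list \<Rightarrow> (real^'n) list" where
  "rim_V l xs = (let k = length xs - 1; j = Suc k - l in map (\<lambda>i. xs ! i - xs ! k) [j..<k])"

definition rim_d :: "real^'n^'m \<Rightarrow> real^'m \<Rightarrow> (real^'n) list \<Rightarrow> real^'q^'m \<Rightarrow> real^'n" where
  "rim_d A b xs S = - (transpose A *v (S *v (transpose S *v (A *v last xs - b))))"

definition rim_step :: "real^'n^'m \<Rightarrow> real^'m \<Rightarrow> nat \<Rightarrow> (real^'n) list \<Rightarrow> real^'q^'m \<Rightarrow> real^'n" where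
  "rim_step A b l xs S =
     (let cols = rim_V l xs @ [rim_d A b xs S];
          L = length cols;
          \<gamma> = (norm (transpose S *v (A *v last xs - b)))^2;
          s = (SOME s :: nat \<Rightarrow> real. \<forall>i<L.
                 cols ! i \<bullet> (\<Sum>j<L. scaleR (s j) (cols ! j)) = (if i = L - 1 then \<gamma> else 0))
      in last xs + (\<Sum>j<L. scaleR (s j) (cols ! j)))"

text \<open>History [x^0, ..., x^k] produced from x^0 and the draws Ss 0, ..., Ss (k-1).\<close>
fun rim_hist :: "real^'n^'m \<Rightarrow> real^'m \<Rightarrow> nat \<Rightarrow> real^'n \<Rightarrow> (nat \<Rightarrow> real^'q^'m) \<Rightarrow> nat \<Rightarrow> (real^'n) list" where
  "rim_hist A b l x0 Ss 0 = [x0]"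
| "rim_hist A b l x0 Ss (Suc k) =
     (let xs = rim_hist A b l x0 Ss k in xs @ [rim_step A b l xs (Ss k)])"

definition rim_Q :: "(real^'q^'m) measure \<Rightarrow> real^'n^'m \<Rightarrow> real^'m \<Rightarrow> real^'n \<Rightarrow> (real^'q^'m) set" where
  "rim_Q M A b x = {S \<in> space M. transpose S *v (A *v x - b) \<noteq> 0}"

definition rim_q :: "(real^'q^'m) measure \<Rightarrow> real^'n^'m \<Rightarrow> real^'m \<Rightarrow> nat \<Rightarrow> (real^'n) list \<Rightarrow> real" where
  "rim_q M A b l xs = Inf ((\<lambda>S. inverse (1 - (norm (proj_span (set (rim_V l xs)) (rim_d A b xs S)))^2
                                            / (norm (rim_d A b xs S))^2)) ` rim_Q M A b (last xs))"

end

theory Submission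
  imports Defs
begin

(* ---- part L1 ---- *)

lemma adj: "(transpose A *v x) \<bullet> y = x \<bullet> ((A::real^'n^'m) *v y)"
  by (simp add: transpose_matrix_vector dot_lmul_matrix)

lemma adj2: "y \<bullet> (transpose A *v x) = (A *v y) \<bullet> (x::real^'m)" for A :: "real^'n^'m"
  by (metis adj inner_commute)

lemma sym_adj: "transpose G = G \<Longrightarrow> (G *v x) \<bullet> y = x \<bullet> ((G::real^'n^'n) *v y)"
  by (metis adj)

lemma vec_eq_inner: "(\<And>y. x \<bullet> y = z \<bullet> (y::'a::real_inner)) \<Longrightarrow> x = z"
  by (metis inner_diff_left inner_eq_zero_iff right_minus_eq)

lemma sym_of_adj:
  fixes G :: "real^'n^'n"
  assumes "\<And>x y. (G *v x) \<bullet> y = x \<bullet> (G *v y)"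
  shows "transpose G = G"
proof -
  have "transpose G *v x = G *v x" for x
    by (rule vec_eq_inner) (metis adj assms)
  then show ?thesis by (simp add: matrix_eq)
qed

lemma norm_transpose_le:
  fixes B :: "real^'n^'m"
  shows "norm (transpose B *v w) \<le> onorm (\<lambda>x. B *v x) * norm w"
proof -
  have bl: "bounded_linear (\<lambda>x. B *v x)"
    by (simp add: matrix_vector_mul_bounded_linear)
  define u where "u = transpose B *v w"
  have "(norm u)^2 = w \<bullet> (B *v u)"
    unfolding u_def power2_norm_eq_inner by (rule adj)
  also have "\<dots> \<le> norm w * norm (B *v u)"
    by (rule norm_cauchy_schwarz)
  also have "\<dots> \<le> norm w * (onorm (\<lambda>x. B *v x) * norm u)"
    by (rule mult_left_mono[OF onorm[OF bl]]) simp
  finally have *: "norm u * norm u \<le> (onorm (\<lambda>x. B *v x) * norm w) * norm u"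
    by (simp only: power2_eq_square ac_simps)
  show ?thesis
  proof (cases "norm u = 0")
    case True then show ?thesis unfolding u_def
      using onorm_pos_le[OF bl] by (simp add: u_def)
  next
    case False then have "norm u > 0" by simp
    with * show ?thesis unfolding u_def[symmetric] by (rule mult_right_le_imp_le)
  qed
qed

lemma quad_zero:
  fixes a c :: real
  assumes "a \<ge> 0" and "\<And>t. 2 * t * a + t^2 * c \<le> 0"
  shows "a = 0"
proof (rule ccontr)
  assume "a \<noteq> 0"
  then have ap: "a > 0" using assms(1) by simp
  define t where "t = a / (\<bar>c\<bar> + 1)"
  have tp: "t > 0" using ap by (simp add: t_def)
  have "2 * t * a + t^2 * c = t * (2 * a + t * c)" by (simp add: power2_eq_square algebra_simps)
  moreover have "t * c \<ge> - a"
  proof -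
    have "t * \<bar>c\<bar> \<le> t * (\<bar>c\<bar> + 1)" using tp by simp
    also have "\<dots> = a" by (simp add: t_def)
    finally have "t * \<bar>c\<bar> \<le> a" .
    moreover have "- (t * \<bar>c\<bar>) \<le> t * c" using tp
      by (metis abs_ge_minus_self abs_mult abs_of_pos minus_le_iff)
    ultimately show ?thesis by linarith
  qed
  then have "2 * a + t * c > 0" using ap by linarith
  ultimately have "2 * t * a + t^2 * c > 0" using tp by simp
  with assms(2)[of t] show False by linarith
qed

lemma eigen_exists:
  fixes G :: "real^'n^'n"
  assumes sym: "transpose G = G" and W: "subspace W" and inv: "\<forall>x\<in>W. G *v x \<in> W"
    and ne: "W \<noteq> {0}"
  shows "\<exists>e\<in>W. norm e = 1 \<and> G *v e = (e \<bullet> (G *v e)) *\<^sub>R e"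
proof -
  obtain x0 where x0: "x0 \<in> W" "x0 \<noteq> 0" using ne W subspace_0 by blast
  define K where "K = W \<inter> sphere 0 1"
  have "compact K" unfolding K_def
    by (rule closed_Int_compact[OF closed_subspace[OF W] compact_sphere])
  moreover have "K \<noteq> {}"
  proof -
    have "(1 / norm x0) *\<^sub>R x0 \<in> K" using x0 W unfolding K_def
      by (simp add: subspace_scale)
    then show ?thesis by blast
  qed
  moreover have "continuous_on K (\<lambda>x. x \<bullet> (G *v x))"
    by (intro continuous_intros matrix_vector_mult_linear_continuous_on)
  ultimately obtain e where eK: "e \<in> K" and emax: "\<And>y. y \<in> K \<Longrightarrow> y \<bullet> (G *v y) \<le> e \<bullet> (G *v e)"
    using continuous_attains_sup by metis
  define \<mu> where "\<mu> = e \<bullet> (G *v e)"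
  have eW: "e \<in> W" and en: "norm e = 1" using eK by (auto simp: K_def)
  have ee: "e \<bullet> e = 1" using en by (simp add: dot_square_norm)
  have bound: "x \<bullet> (G *v x) \<le> \<mu> * (x \<bullet> x)" if xW: "x \<in> W" for x
  proof (cases "x = 0")
    case True then show ?thesis by simp
  next
    case False
    define u where "u = (1 / norm x) *\<^sub>R x"
    have "u \<in> K" using xW False W by (simp add: K_def u_def subspace_scale)
    then have "u \<bullet> (G *v u) \<le> \<mu>" using emax by (simp add: \<mu>_def)
    moreover have "u \<bullet> (G *v u) = (x \<bullet> (G *v x)) / (norm x)^2"
      by (simp add: u_def matrix_vector_mult_scaleR power2_eq_square)
    ultimately have "x \<bullet> (G *v x) / (norm x)^2 \<le> \<mu>" by simp
    moreover have "(norm x)^2 > 0" using False by simp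
    ultimately have "x \<bullet> (G *v x) \<le> \<mu> * (norm x)^2" by (simp add: divide_le_eq)
    then show ?thesis by (simp add: power2_norm_eq_inner)
  qed
  define w where "w = G *v e - \<mu> *\<^sub>R e"
  have wW: "w \<in> W" unfolding w_def using inv eW W by (simp add: subspace_diff subspace_scale)
  have "2 * t * (w \<bullet> w) + t^2 * (w \<bullet> (G *v w) - \<mu> * (w \<bullet> w)) \<le> 0" for t
  proof -
    have "e + t *\<^sub>R w \<in> W" using eW wW W by (simp add: subspace_add subspace_scale)
    from bound[OF this]
    have "(e + t *\<^sub>R w) \<bullet> (G *v e + t *\<^sub>R (G *v w)) \<le> \<mu> * ((e + t *\<^sub>R w) \<bullet> (e + t *\<^sub>R w))"
      by (simp add: matrix_vector_right_distrib matrix_vector_mult_scaleR)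
    moreover have "w \<bullet> (G *v e) = e \<bullet> (G *v w)"
      using sym_adj[OF sym, of w e] by (simp add: inner_commute)
    moreover have "w \<bullet> (G *v e) = w \<bullet> w + \<mu> * (w \<bullet> e)"
      by (simp add: w_def inner_diff_right inner_diff_left inner_commute) (simp add: algebra_simps)
    ultimately have H: "t * (t * (w \<bullet> (G *v w))) + t * (2 * (e \<bullet> (G *v w)))
        \<le> t * (t * (w \<bullet> w * \<mu>)) + t * (e \<bullet> w * (2 * \<mu>))"
      and P: "w \<bullet> w + e \<bullet> w * \<mu> = e \<bullet> (G *v w)"
      by (simp_all add: inner_add_left inner_add_right power2_eq_square algebra_simps \<mu>_def ee inner_commute)
    have "t * (2 * (e \<bullet> (G *v w))) = t * (w \<bullet> w * 2) + t * (e \<bullet> w * (2 * \<mu>))"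
      unfolding P[symmetric] by (simp add: algebra_simps)
    with H have "t * (t * (w \<bullet> (G *v w))) + t * (w \<bullet> w * 2) \<le> t * (t * (w \<bullet> w * \<mu>))"
      by linarith
    then show ?thesis by (simp add: power2_eq_square algebra_simps)
  qed
  then have "w \<bullet> w = 0" by (intro quad_zero) auto
  then have "G *v e = \<mu> *\<^sub>R e" by (simp add: w_def)
  then show ?thesis using eW en by (auto simp: \<mu>_def)
qed

definition onb :: "real^'n^'n \<Rightarrow> (real^'n) set \<Rightarrow> (real^'n) set \<Rightarrow> bool" where
  "onb G W B \<longleftrightarrow> B \<subseteq> W \<and> finite B \<and> pairwise orthogonal B \<and> (\<forall>b\<in>B. norm b = 1) \<and>
     span B = W \<and> (\<forall>b\<in>B. G *v b = (b \<bullet> (G *v b)) *\<^sub>R b)"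

lemma spectral_sub:
  fixes G :: "real^'n^'n"
  assumes sym: "transpose G = G"
  shows "subspace W \<Longrightarrow> (\<forall>x\<in>W. G *v x \<in> W) \<Longrightarrow> \<exists>B. onb G W B"
proof (induction "dim W" arbitrary: W rule: less_induct)
  case less
  show ?case
  proof (cases "W = {0}")
    case True
    then show ?thesis by (intro exI[of _ "{}"]) (auto simp: onb_def)
  next
    case False
    obtain e where eW: "e \<in> W" and en: "norm e = 1" and eig: "G *v e = (e \<bullet> (G *v e)) *\<^sub>R e"
      using eigen_exists[OF sym less.prems False] by blast
    define \<mu> where "\<mu> = e \<bullet> (G *v e)"
    have ee: "e \<bullet> e = 1" using en by (simp add: dot_square_norm)
    define W' where "W' = {x \<in> W. e \<bullet> x = 0}"
    have sW': "subspace W'" unfolding W'_def using less.prems(1)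
      by (auto simp: subspace_def inner_add_right)
    have iW': "\<forall>x\<in>W'. G *v x \<in> W'"
    proof
      fix x assume "x \<in> W'"
      then have "x \<in> W" "e \<bullet> x = 0" by (auto simp: W'_def)
      moreover have "e \<bullet> (G *v x) = (G *v e) \<bullet> x" using sym_adj[OF sym, of e x] by simp
      moreover have "(G *v e) \<bullet> x = 0" using eig \<open>e \<bullet> x = 0\<close> by (metis inner_scaleR_left mult_zero_right)
      ultimately show "G *v x \<in> W'" using less.prems(2) by (auto simp: W'_def)
    qed
    have "e \<notin> W'" using ee by (simp add: W'_def)
    then have "W' \<subset> W" using eW unfolding W'_def by blast
    then have "span W' \<subset> span W" using sW' less.prems(1) by (metis span_eq_iff)
    then have "dim W' < dim W" by (rule dim_psubset)
    from less.hyps[OF this sW' iW'] obtain B' where B': "onb G W' B'" by blast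
    have eB': "e \<notin> B'" using B' ee by (auto simp: onb_def W'_def)
    have "onb G W (insert e B')"
      unfolding onb_def
    proof (intro conjI)
      show "insert e B' \<subseteq> W" using B' eW by (auto simp: onb_def W'_def)
      show "finite (insert e B')" using B' by (simp add: onb_def)
      show "pairwise orthogonal (insert e B')"
        using B' eB' by (auto simp: onb_def W'_def pairwise_insert orthogonal_def inner_commute)
      show "\<forall>b\<in>insert e B'. norm b = 1" using B' en by (simp add: onb_def)
      show "\<forall>b\<in>insert e B'. G *v b = (b \<bullet> (G *v b)) *\<^sub>R b" using B' eig by (simp add: onb_def)
      show "span (insert e B') = W"
      proof
        have "insert e B' \<subseteq> W" using B' eW by (auto simp: onb_def W'_def)
        then show "span (insert e B') \<subseteq> W" using less.prems(1) by (simp add: span_minimal)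
        show "W \<subseteq> span (insert e B')"
        proof
          fix x assume xW: "x \<in> W"
          have "x - (e \<bullet> x) *\<^sub>R e \<in> W'" using xW eW less.prems(1) ee
            by (simp add: W'_def subspace_diff subspace_scale inner_diff_right)
          then have "x - (e \<bullet> x) *\<^sub>R e \<in> span B'" using B' by (simp add: onb_def)
          then show "x \<in> span (insert e B')" by (auto simp: span_insert)
        qed
      qed
    qed
    then show ?thesis by blast
  qed
qed

lemma spectral:
  fixes G :: "real^'n^'n"
  assumes sym: "transpose G = G"
  obtains B where "onb G UNIV B"
  using spectral_sub[OF sym, of UNIV] by auto

lemma onb_expand:
  assumes "onb G W B" "x \<in> W"
  shows "(\<Sum>b\<in>B. (x \<bullet> b) *\<^sub>R b) = x"
  using assms by (intro orthonormal_basis_expand) (auto simp: onb_def)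

lemma onb_inner_eq:
  assumes "onb G W B" "b \<in> B" "c \<in> B"
  shows "b \<bullet> c = (if b = c then 1 else 0)"
  using assms by (auto simp: onb_def pairwise_def orthogonal_def dot_square_norm)

lemma onb_parseval:
  assumes "onb G W B" "x \<in> W"
  shows "x \<bullet> y = (\<Sum>b\<in>B. (x \<bullet> b) * (y \<bullet> b))"
proof -
  have "x \<bullet> y = (\<Sum>b\<in>B. (x \<bullet> b) *\<^sub>R b) \<bullet> y" using onb_expand[OF assms] by simp
  also have "\<dots> = (\<Sum>b\<in>B. (x \<bullet> b) * (y \<bullet> b))"
    by (simp add: inner_sum_left inner_sum_right inner_commute mult.commute)
  finally show ?thesis .
qed

lemma onb_apply:
  assumes "onb G UNIV B"
  shows "G *v x = (\<Sum>b\<in>B. ((x \<bullet> b) * (b \<bullet> (G *v b))) *\<^sub>R b)"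
proof -
  have "G *v x = G *v (\<Sum>b\<in>B. (x \<bullet> b) *\<^sub>R b)" using onb_expand[OF assms] by simp
  also have "\<dots> = (\<Sum>b\<in>B. (x \<bullet> b) *\<^sub>R (G *v b))"
    by (simp add: matrix_vector_mult_scaleR vec.sum)
  also have "\<dots> = (\<Sum>b\<in>B. ((x \<bullet> b) * (b \<bullet> (G *v b))) *\<^sub>R b)"
    using assms unfolding onb_def by (intro sum.cong refl) (metis scaleR_scaleR)
  finally show ?thesis .
qed


(* ---- part L2 ---- *)

section \<open>Orthogonal projection\<close>

lemma proj_span_unique:
  fixes U :: "'a::euclidean_space set"
  assumes "p \<in> span U" "\<forall>u\<in>U. (d - p) \<bullet> u = 0" "p' \<in> span U" "\<forall>u\<in>U. (d - p') \<bullet> u = 0"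
  shows "p = p'"
proof -
  have "p - p' \<in> span U" using assms by (simp add: span_diff)
  moreover have "\<forall>u\<in>U. orthogonal (p - p') u"
    using assms by (auto simp: orthogonal_def inner_diff_left)
  ultimately have "orthogonal (p - p') (p - p')" by (meson orthogonal_to_span)
  then show ?thesis by (metis orthogonal_self right_minus_eq)
qed

lemma proj_span_props:
  fixes U :: "'a::euclidean_space set"
  shows "proj_span U d \<in> span U \<and> (\<forall>u\<in>span U. (d - proj_span U d) \<bullet> u = 0)"
proof -
  obtain y z where y: "y \<in> span U" and z: "\<And>w. w \<in> span U \<Longrightarrow> orthogonal z w" and d: "d = y + z"
    using orthogonal_subspace_decomp_exists by metis
  have P: "y \<in> span U \<and> (\<forall>u\<in>U. (d - y) \<bullet> u = 0)"
    using y z d by (auto simp: orthogonal_def span_base)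
  have "proj_span U d = y"
    unfolding proj_span_def
    by (rule the_equality) (use P proj_span_unique in blast)+
  then show ?thesis using y z d by (auto simp: orthogonal_def)
qed

section \<open>Square root\<close>

lemma sqrt_eig:
  fixes R H :: "real^'n^'n"
  assumes sym: "transpose R = R" and psd: "\<forall>v. 0 \<le> v \<bullet> (R *v v)" and sq: "R ** R = H"
    and eig: "H *v b = lm *\<^sub>R b"
  shows "R *v b = sqrt lm *\<^sub>R b"
proof (cases "b = 0")
  case True then show ?thesis by simp
next
  case False
  have RR: "R *v (R *v v) = H *v v" for v using sq by (simp add: matrix_vector_mul_assoc)
  have "lm * (b \<bullet> b) = b \<bullet> (H *v b)" using eig by simp
  also have "\<dots> = (R *v b) \<bullet> (R *v b)" using RR[of b] sym_adj[OF sym, of b "R *v b"] by simp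
  finally have "lm * (b \<bullet> b) \<ge> 0" by simp
  moreover have "b \<bullet> b > 0" using False by simp
  ultimately have lam: "lm \<ge> 0" by (simp add: zero_le_mult_iff)
  define s where "s = sqrt lm"
  have s: "s \<ge> 0" "s * s = lm" using lam by (auto simp: s_def)
  define u where "u = R *v b - s *\<^sub>R b"
  have Ru: "R *v u = - s *\<^sub>R u"
    unfolding u_def using RR[of b] eig s
    by (simp add: matrix_vector_right_distrib matrix_vector_mult_scaleR vec.diff algebra_simps scaleR_diff_right)
  have "u = 0"
  proof (cases "s = 0")
    case True
    then have Ru0: "R *v u = 0" using Ru by simp
    have "u = R *v b" using True by (simp add: u_def)
    then have "u \<bullet> u = b \<bullet> (R *v u)" using sym_adj[OF sym, of b u] by simp
    then show ?thesis using Ru0 by simp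
  next
    case False
    then have sp: "s > 0" using s by simp
    have "0 \<le> u \<bullet> (R *v u)" using psd by simp
    also have "\<dots> = - s * (u \<bullet> u)" using Ru by simp
    finally have "u \<bullet> u \<le> 0" using sp by (simp add: mult_le_0_iff)
    then show ?thesis by (metis inner_eq_zero_iff inner_ge_zero order_antisym)
  qed
  then show ?thesis by (simp add: u_def s_def)
qed

lemma msqrt_props:
  fixes H :: "real^'n^'n"
  assumes sym: "transpose H = H" and psd: "\<forall>v. 0 \<le> v \<bullet> (H *v v)"
  shows "transpose (msqrt H) = msqrt H \<and> msqrt H ** msqrt H = H"
proof -
  obtain B where B: "onb H UNIV B" using spectral[OF sym] by blast
  define lam where "lam b = b \<bullet> (H *v b)" for b
  have eigB: "H *v b = lam b *\<^sub>R b" if "b \<in> B" for b using B that by (simp add: onb_def lam_def)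
  define f where "f x = (\<Sum>b\<in>B. (sqrt (lam b) * (x \<bullet> b)) *\<^sub>R b)" for x
  have lin: "linear f" unfolding f_def
    by (intro linear_compose_sum) (auto simp: linear_iff inner_add_left algebra_simps scaleR_add_left)
  define R where "R = matrix f"
  have Rf: "R *v x = f x" for x unfolding R_def using lin by (simp add: matrix_vector_mul(2))
  have fb: "f x \<bullet> c = sqrt (lam c) * (x \<bullet> c)" if "c \<in> B" for x c
  proof -
    have "f x \<bullet> c = (\<Sum>b\<in>B. (sqrt (lam b) * (x \<bullet> b)) * (b \<bullet> c))" by (simp add: f_def inner_sum_left)
    also have "\<dots> = (\<Sum>b\<in>B. if b = c then sqrt (lam b) * (x \<bullet> b) else 0)"
      using onb_inner_eq[OF B _ that] by (intro sum.cong refl) auto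
    also have "\<dots> = sqrt (lam c) * (x \<bullet> c)" using B that by (simp add: onb_def)
    finally show ?thesis .
  qed
  have Rsym: "transpose R = R"
  proof (rule sym_of_adj)
    fix x y
    have "(R *v x) \<bullet> y = (\<Sum>b\<in>B. (sqrt (lam b) * (x \<bullet> b)) * (b \<bullet> y))" by (simp add: Rf f_def inner_sum_left)
    also have "\<dots> = (\<Sum>b\<in>B. (sqrt (lam b) * (y \<bullet> b)) * (x \<bullet> b))"
      by (intro sum.cong refl) (metis inner_commute mult.commute mult.assoc)
    also have "\<dots> = x \<bullet> (R *v y)" by (simp add: Rf f_def inner_sum_right)
    finally show "(R *v x) \<bullet> y = x \<bullet> (R *v y)" .
  qed
  have lam0: "lam b \<ge> 0" for b using psd by (simp add: lam_def)
  have Rpsd: "\<forall>v. 0 \<le> v \<bullet> (R *v v)"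
  proof
    fix v
    have "v \<bullet> (R *v v) = (\<Sum>b\<in>B. sqrt (lam b) * (v \<bullet> b) * (v \<bullet> b))"
      by (simp add: Rf f_def inner_sum_right mult.assoc)
    also have "\<dots> \<ge> 0" using lam0 by (intro sum_nonneg) (simp add: mult.assoc)
    finally show "0 \<le> v \<bullet> (R *v v)" .
  qed
  have RR: "R ** R = H"
  proof -
    have "(R ** R) *v x = H *v x" for x
    proof -
      have "(R ** R) *v x = R *v (R *v x)" by (simp only: matrix_vector_mul_assoc)
      also have "\<dots> = f (f x)" by (simp only: Rf)
      also have "\<dots> = (\<Sum>b\<in>B. (sqrt (lam b) * (sqrt (lam b) * (x \<bullet> b))) *\<^sub>R b)"
        unfolding f_def[of "f x"] using fb by (intro sum.cong refl) simp
      also have "\<dots> = (\<Sum>b\<in>B. ((x \<bullet> b) * (b \<bullet> (H *v b))) *\<^sub>R b)"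
      proof (intro sum.cong refl)
        fix b
        have "sqrt (lam b) * (sqrt (lam b) * (x \<bullet> b)) = (sqrt (lam b) * sqrt (lam b)) * (x \<bullet> b)"
          by (simp only: mult.assoc)
        also have "\<dots> = lam b * (x \<bullet> b)" using lam0[of b] by simp
        finally show "(sqrt (lam b) * (sqrt (lam b) * (x \<bullet> b))) *\<^sub>R b = ((x \<bullet> b) * (b \<bullet> (H *v b))) *\<^sub>R b"
          by (simp add: lam_def mult.commute)
      qed
      also have "\<dots> = H *v x" by (rule onb_apply[OF B, symmetric])
      finally show ?thesis .
    qed
    then show ?thesis by (simp add: matrix_eq)
  qed
  have uniq: "R' = R" if R': "transpose R' = R' \<and> (\<forall>v. 0 \<le> v \<bullet> (R' *v v)) \<and> R' ** R' = H" for R'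
  proof -
    have "R' *v x = R *v x" for x
    proof -
      have eq: "R' *v b = R *v b" if "b \<in> B" for b
        using sqrt_eig[of R' H b "lam b"] sqrt_eig[OF Rsym Rpsd RR, of b "lam b"] R' eigB[OF that] by simp
      have "R' *v x = R' *v (\<Sum>b\<in>B. (x \<bullet> b) *\<^sub>R b)" using onb_expand[OF B] by simp
      also have "\<dots> = (\<Sum>b\<in>B. (x \<bullet> b) *\<^sub>R (R' *v b))" by (simp add: vec.sum matrix_vector_mult_scaleR)
      also have "\<dots> = (\<Sum>b\<in>B. (x \<bullet> b) *\<^sub>R (R *v b))" using eq by simp
      also have "\<dots> = R *v (\<Sum>b\<in>B. (x \<bullet> b) *\<^sub>R b)" by (simp add: vec.sum matrix_vector_mult_scaleR)
      also have "\<dots> = R *v x" using onb_expand[OF B] by simp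
      finally show ?thesis .
    qed
    then show ?thesis by (simp add: matrix_eq)
  qed
  have "msqrt H = R"
  proof -
    have P: "transpose R = R \<and> (\<forall>v. 0 \<le> v \<bullet> (R *v v)) \<and> R ** R = H" using Rsym Rpsd RR by blast
    show ?thesis unfolding msqrt_def by (rule the_equality[where P="\<lambda>R. transpose R = R \<and> (\<forall>v. 0 \<le> v \<bullet> (R *v v)) \<and> R ** R = H", OF P uniq])
  qed
  then show ?thesis using Rsym RR by simp
qed


(* ---- part L3 ---- *)

definition penrose :: "real^'n^'m \<Rightarrow> real^'m^'n \<Rightarrow> bool" where
  "penrose A X \<longleftrightarrow> A ** X ** A = A \<and> X ** A ** X = X \<and>
                   transpose (A ** X) = A ** X \<and> transpose (X ** A) = X ** A"

lemma penrose_unique: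
  assumes PX: "penrose A X" and PY: "penrose A Y"
  shows "X = Y"
proof -
  have h1: "A ** X ** A = A" "X ** A ** X = X" "transpose (A ** X) = A ** X" "transpose (X ** A) = X ** A"
    using PX by (auto simp: penrose_def)
  have g1: "A ** Y ** A = A" "Y ** A ** Y = Y" "transpose (A ** Y) = A ** Y" "transpose (Y ** A) = Y ** A"
    using PY by (auto simp: penrose_def)
  have AX: "A ** X = transpose X ** transpose A" by (metis h1(3) matrix_transpose_mul)
  have YA: "Y ** A = transpose A ** transpose Y" by (metis g1(4) matrix_transpose_mul)
  have e3: "transpose A = transpose A ** (A ** Y)"
    by (metis g1(1) g1(3) matrix_transpose_mul)
  have f3: "transpose A = (X ** A) ** transpose A"
    by (metis h1(1) h1(4) matrix_mul_assoc matrix_transpose_mul)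
  have X1: "X ** (transpose X ** transpose A) = X"
    by (metis AX h1(2) matrix_mul_assoc)
  have "X = X ** (transpose X ** transpose A)" using X1 by simp
  also have "\<dots> = X ** (transpose X ** (transpose A ** (A ** Y)))"
    by (simp only: e3[symmetric])
  also have "\<dots> = (X ** (transpose X ** transpose A)) ** (A ** Y)"
    by (simp only: matrix_mul_assoc)
  also have "\<dots> = X ** (A ** Y)" by (simp only: X1)
  finally have X2: "X = X ** (A ** Y)" .
  have "Y = (Y ** A) ** Y" using g1(2) by simp
  also have "\<dots> = (transpose A ** transpose Y) ** Y" by (simp only: YA)
  also have "\<dots> = (((X ** A) ** transpose A) ** transpose Y) ** Y" by (simp only: f3[symmetric])
  also have "\<dots> = (X ** A) ** ((transpose A ** transpose Y) ** Y)" by (simp only: matrix_mul_assoc)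
  also have "\<dots> = (X ** A) ** ((Y ** A) ** Y)" by (simp only: YA)
  also have "\<dots> = (X ** A) ** Y" by (simp only: g1(2))
  finally have "Y = X ** (A ** Y)" by (simp only: matrix_mul_assoc)
  with X2 show ?thesis by simp
qed

lemma penrose_exists:
  fixes A :: "real^'n^'m"
  shows "\<exists>X. penrose A X"
proof -
  define G where "G = transpose A ** A"
  have Gsym: "transpose G = G" by (simp add: G_def matrix_transpose_mul)
  obtain B where B: "onb G UNIV B" using spectral[OF Gsym] by blast
  define lam where "lam b = b \<bullet> (G *v b)" for b
  have Gv: "G *v x = transpose A *v (A *v x)" for x by (simp add: G_def matrix_vector_mul_assoc)
  have eigB: "G *v b = lam b *\<^sub>R b" if "b \<in> B" for b using B that by (simp add: onb_def lam_def)
  have F2: "b \<bullet> (transpose A *v (A *v x)) = lam b * (b \<bullet> x)" if "b \<in> B" for b x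
  proof -
    have "b \<bullet> (transpose A *v (A *v x)) = b \<bullet> (G *v x)" by (simp only: Gv)
    also have "\<dots> = (G *v b) \<bullet> x" using sym_adj[OF Gsym, of b x] by simp
    also have "\<dots> = lam b * (b \<bullet> x)" using eigB[OF that] by simp
    finally show ?thesis .
  qed
  have F3: "A *v b = 0" if "lam b = 0" for b
  proof -
    have "lam b = (A *v b) \<bullet> (A *v b)" unfolding lam_def by (simp only: Gv adj2)
    then show ?thesis using that by simp
  qed
  define f where "f y = (\<Sum>b\<in>B. ((b \<bullet> (transpose A *v y)) / lam b) *\<^sub>R b)" for y
  have lin: "linear f" unfolding f_def
    by (intro linear_compose_sum)
       (auto simp del: transpose_matrix_vector simp: linear_iff inner_add_right matrix_vector_right_distrib matrix_vector_mult_scaleR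
          add_divide_distrib scaleR_add_left)
  define X where "X = matrix f"
  have Xf: "X *v y = f y" for y unfolding X_def using lin by (simp add: matrix_vector_mul(2))
  have fc: "f y \<bullet> c = (c \<bullet> (transpose A *v y)) / lam c" if "c \<in> B" for y c
  proof -
    have "f y \<bullet> c = (\<Sum>b\<in>B. ((b \<bullet> (transpose A *v y)) / lam b) * (b \<bullet> c))" by (simp add: f_def inner_sum_left)
    also have "\<dots> = (\<Sum>b\<in>B. if b = c then (b \<bullet> (transpose A *v y)) / lam b else 0)"
      using onb_inner_eq[OF B _ that] by (intro sum.cong refl) auto
    also have "\<dots> = (c \<bullet> (transpose A *v y)) / lam c" using B that by (simp add: onb_def)
    finally show ?thesis .
  qed
  have fA: "f (A *v x) = (\<Sum>b\<in>B. ((lam b * (b \<bullet> x)) / lam b) *\<^sub>R b)" for x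
    unfolding f_def using F2 by (intro sum.cong refl) simp
  have C1: "A ** X ** A = A"
  proof -
    have "(A ** X ** A) *v x = A *v x" for x
    proof -
      have "(A ** X ** A) *v x = A *v (X *v (A *v x))" by (simp only: matrix_vector_mul_assoc matrix_mul_assoc)
      also have "\<dots> = A *v (\<Sum>b\<in>B. ((lam b * (b \<bullet> x)) / lam b) *\<^sub>R b)" by (simp only: Xf fA)
      also have "\<dots> = (\<Sum>b\<in>B. ((lam b * (b \<bullet> x)) / lam b) *\<^sub>R (A *v b))"
        by (simp add: vec.sum matrix_vector_mult_scaleR)
      also have "\<dots> = (\<Sum>b\<in>B. (x \<bullet> b) *\<^sub>R (A *v b))"
      proof (intro sum.cong refl)
        fix b show "((lam b * (b \<bullet> x)) / lam b) *\<^sub>R (A *v b) = (x \<bullet> b) *\<^sub>R (A *v b)"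
          using F3[of b] by (cases "lam b = 0") (auto simp: inner_commute)
      qed
      also have "\<dots> = A *v (\<Sum>b\<in>B. (x \<bullet> b) *\<^sub>R b)" by (simp add: vec.sum matrix_vector_mult_scaleR)
      also have "\<dots> = A *v x" using onb_expand[OF B, of x] by simp
      finally show ?thesis .
    qed
    then show ?thesis by (simp add: matrix_eq)
  qed
  have C2: "X ** A ** X = X"
  proof -
    have "(X ** A ** X) *v y = X *v y" for y
    proof -
      have "(X ** A ** X) *v y = X *v (A *v (X *v y))" by (simp only: matrix_vector_mul_assoc matrix_mul_assoc)
      also have "\<dots> = f (A *v f y)" by (simp only: Xf)
      also have "\<dots> = (\<Sum>b\<in>B. ((lam b * (b \<bullet> f y)) / lam b) *\<^sub>R b)" by (rule fA)
      also have "\<dots> = (\<Sum>b\<in>B. ((b \<bullet> (transpose A *v y)) / lam b) *\<^sub>R b)"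
      proof (intro sum.cong refl)
        fix b assume bB: "b \<in> B"
        show "((lam b * (b \<bullet> f y)) / lam b) *\<^sub>R b = ((b \<bullet> (transpose A *v y)) / lam b) *\<^sub>R b"
          using fc[OF bB, of y] by (cases "lam b = 0") (auto simp: inner_commute)
      qed
      also have "\<dots> = f y" by (simp only: f_def)
      finally show ?thesis by (simp only: Xf)
    qed
    then show ?thesis by (simp add: matrix_eq)
  qed
  have C3: "transpose (A ** X) = A ** X"
  proof (rule sym_of_adj)
    fix x y
    have "((A ** X) *v x) \<bullet> y = (\<Sum>b\<in>B. ((b \<bullet> (transpose A *v x)) / lam b) * ((A *v b) \<bullet> y))"
      by (simp add: matrix_vector_mul_assoc[symmetric] Xf f_def vec.sum matrix_vector_mult_scaleR inner_sum_left)
    also have "\<dots> = (\<Sum>b\<in>B. (((A *v b) \<bullet> x) / lam b) * ((A *v b) \<bullet> y))"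
      by (simp only: adj2)
    also have "\<dots> = (\<Sum>b\<in>B. (((A *v b) \<bullet> y) / lam b) * ((A *v b) \<bullet> x))"
      by (simp add: mult.commute)
    also have "\<dots> = (\<Sum>b\<in>B. ((b \<bullet> (transpose A *v y)) / lam b) * ((A *v b) \<bullet> x))"
      by (simp only: adj2)
    also have "\<dots> = x \<bullet> ((A ** X) *v y)"
      by (simp add: matrix_vector_mul_assoc[symmetric] Xf f_def vec.sum matrix_vector_mult_scaleR inner_sum_right inner_commute)
    finally show "((A ** X) *v x) \<bullet> y = x \<bullet> ((A ** X) *v y)" .
  qed
  have C4: "transpose (X ** A) = X ** A"
  proof (rule sym_of_adj)
    fix x y
    have key: "((lam b * (b \<bullet> x)) / lam b) * (b \<bullet> y) = ((lam b * (b \<bullet> y)) / lam b) * (b \<bullet> x)" for b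
      by (cases "lam b = 0") auto
    have "((X ** A) *v x) \<bullet> y = (\<Sum>b\<in>B. ((lam b * (b \<bullet> x)) / lam b) * (b \<bullet> y))"
      by (simp only: matrix_vector_mul_assoc[symmetric] Xf fA inner_sum_left inner_scaleR_left)
    also have "\<dots> = (\<Sum>b\<in>B. ((lam b * (b \<bullet> y)) / lam b) * (b \<bullet> x))" by (simp only: key)
    also have "\<dots> = x \<bullet> ((X ** A) *v y)"
      by (simp only: matrix_vector_mul_assoc[symmetric] Xf fA inner_sum_right inner_scaleR_right inner_commute[of x] mult.commute)
    finally show "((X ** A) *v x) \<bullet> y = x \<bullet> ((X ** A) *v y)" .
  qed
  show ?thesis using C1 C2 C3 C4 by (auto simp: penrose_def)
qed

lemma pinv_penrose: "penrose A (pinv A)"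
proof -
  obtain X where X: "penrose A X" using penrose_exists by blast
  have "pinv A = X" unfolding pinv_def
    by (rule the_equality) (use X penrose_unique in \<open>auto simp: penrose_def\<close>)
  then show ?thesis using X by simp
qed

lemma pinv_sol:
  fixes A :: "real^'n^'m"
  assumes "\<exists>x. A *v x = b"
  shows "A *v (pinv A *v b) = b" "\<exists>y. pinv A *v b = transpose A *v y"
proof -
  obtain x where x: "A *v x = b" using assms by blast
  let ?X = "pinv A"
  have P: "A ** ?X ** A = A" "?X ** A ** ?X = ?X" "transpose (?X ** A) = ?X ** A"
    using pinv_penrose[of A] by (auto simp: penrose_def)
  have "A *v (?X *v b) = (A ** ?X ** A) *v x" by (simp add: x[symmetric] matrix_vector_mul_assoc matrix_mul_assoc)
  then show "A *v (?X *v b) = b" using P(1) x by simp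
  have "?X = transpose A ** transpose ?X ** ?X"
  proof -
    have "?X = (?X ** A) ** ?X" using P(2) by simp
    also have "\<dots> = transpose (?X ** A) ** ?X" using P(3) by simp
    also have "\<dots> = transpose A ** transpose ?X ** ?X" by (simp add: matrix_transpose_mul)
    finally show ?thesis .
  qed
  then have "?X *v b = transpose A *v ((transpose ?X ** ?X) *v b)"
    by (metis matrix_mul_assoc matrix_vector_mul_assoc)
  then show "\<exists>y. ?X *v b = transpose A *v y" by blast
qed


(* ---- part L4 ---- *)

lemma span_list:
  fixes cs :: "'a::real_vector list"
  shows "v \<in> span (set cs) \<Longrightarrow> \<exists>s. v = (\<Sum>j<length cs. s j *\<^sub>R cs ! j)"
proof (induction cs arbitrary: v)
  case Nil then show ?case by simp
next
  case (Cons c cs)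
  then obtain k where "v - k *\<^sub>R c \<in> span (set cs)" by (auto simp: span_insert)
  with Cons.IH obtain s where s: "v - k *\<^sub>R c = (\<Sum>j<length cs. s j *\<^sub>R cs ! j)" by blast
  define s' where "s' j = (case j of 0 \<Rightarrow> k | Suc i \<Rightarrow> s i)" for j
  have "(\<Sum>j<length (c # cs). s' j *\<^sub>R (c # cs) ! j) = k *\<^sub>R c + (\<Sum>j<length cs. s j *\<^sub>R cs ! j)"
    by (simp only: length_Cons sum.lessThan_Suc_shift) (simp add: s'_def)
  also have "\<dots> = v" using s by (simp add: algebra_simps)
  finally show ?case by metis
qed

lemma sum_list_in_span:
  "(\<Sum>j<length cs. s j *\<^sub>R cs ! j) \<in> span (set cs)"
  by (intro span_sum span_scale span_base) simp

definition rng :: "real^'n^'m \<Rightarrow> real^'n \<Rightarrow> bool" where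
  "rng A v \<longleftrightarrow> (\<exists>y. v = transpose A *v y)"

lemma rng_add: "rng A u \<Longrightarrow> rng A v \<Longrightarrow> rng A (u + v)"
  unfolding rng_def by (metis matrix_vector_right_distrib)

lemma rng_diff: "rng A u \<Longrightarrow> rng A v \<Longrightarrow> rng A (u - v)"
  unfolding rng_def by (metis vec.diff)

lemma rng_0: "rng A 0"
  unfolding rng_def by (rule exI[of _ 0]) (metis vec.zero)

lemma rng_scale: "rng A x \<Longrightarrow> rng A (c *\<^sub>R x)"
  unfolding rng_def by (metis matrix_vector_mult_scaleR)

lemma subspace_rng: "subspace {v. rng A v}"
  unfolding subspace_def by (simp add: rng_0 rng_add rng_scale)

lemma rng_span:
  assumes "set cs \<subseteq> {v. rng A v}" "v \<in> span (set cs)"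
  shows "rng A v"
proof -
  have "span (set cs) \<subseteq> {v. rng A v}" by (rule span_minimal[OF assms(1) subspace_rng])
  then show ?thesis using assms(2) by auto
qed

lemma rim_V_eq: "xs \<noteq> [] \<Longrightarrow> rim_V l xs = map (\<lambda>i. xs ! i - last xs) [Suc (length xs - 1) - l..<length xs - 1]"
  by (simp add: rim_V_def Let_def last_conv_nth)

context
  fixes A :: "real^'n^'m" and b :: "real^'m" and l :: nat and xstar :: "real^'n"
  assumes Ax: "A *v xstar = b" and xr: "rng A xstar"
begin

definition rinv :: "(real^'n) list \<Rightarrow> bool" where
  "rinv xs \<longleftrightarrow> xs \<noteq> [] \<and> (\<forall>i<length xs. rng A (xs ! i - xstar)) \<and>
      (\<forall>v\<in>set (rim_V l xs). v \<bullet> (last xs - xstar) = 0)"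

lemma rinv_init: "rng A x0 \<Longrightarrow> rinv [x0]"
  using xr by (auto simp: rinv_def rim_V_def rng_diff)

lemma d_e:
  assumes "xs \<noteq> []"
  shows "rim_d A b xs S \<bullet> (last xs - xstar) = - ((norm (transpose S *v (A *v last xs - b)))^2)"
proof -
  have r: "A *v (last xs - xstar) = A *v last xs - b" using Ax by (simp add: vec.diff)
  have "rim_d A b xs S \<bullet> (last xs - xstar)
      = - ((transpose A *v (S *v (transpose S *v (A *v last xs - b)))) \<bullet> (last xs - xstar))"
    by (simp add: rim_d_def del: transpose_matrix_vector)
  also have "\<dots> = - ((S *v (transpose S *v (A *v last xs - b))) \<bullet> (A *v last xs - b))"
    by (simp only: adj r)
  also have "\<dots> = - ((transpose S *v (A *v last xs - b)) \<bullet> (transpose S *v (A *v last xs - b)))"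
    by (simp only: adj2 inner_commute)
  finally show ?thesis by (simp add: power2_norm_eq_inner)
qed

lemma d_rng: "rng A (rim_d A b xs S)"
  unfolding rng_def rim_d_def by (metis vec.neg)

lemma cols_rng:
  assumes "rinv xs"
  shows "set (rim_V l xs @ [rim_d A b xs S]) \<subseteq> {v. rng A v}"
proof -
  have "xs \<noteq> []" using assms by (simp add: rinv_def)
  have "rng A (xs ! i - last xs)" if "i < length xs" for i
  proof -
    have "rng A (xs ! i - xstar)" "rng A (last xs - xstar)"
      using assms that \<open>xs \<noteq> []\<close> by (auto simp: rinv_def last_conv_nth)
    then have "rng A ((xs ! i - xstar) - (last xs - xstar))" by (rule rng_diff)
    then show ?thesis by simp
  qed
  then show ?thesis using \<open>xs \<noteq> []\<close> d_rng by (auto simp: rim_V_eq)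
qed

lemma step_eq:
  assumes I: "rinv xs" and S: "transpose S *v (A *v last xs - b) \<noteq> 0"
  defines "cols \<equiv> rim_V l xs @ [rim_d A b xs S]"
  defines "p \<equiv> proj_span (set cols) (xstar - last xs)"
  shows "rim_step A b l xs S = last xs + p"
proof -
  have ne: "xs \<noteq> []" using I by (simp add: rinv_def)
  let ?e = "last xs - xstar"
  let ?\<gamma> = "(norm (transpose S *v (A *v last xs - b)))^2"
  let ?L = "length cols"
  have P: "p \<in> span (set cols)" "\<forall>u\<in>span (set cols). (xstar - last xs - p) \<bullet> u = 0"
    using proj_span_props[of "set cols" "xstar - last xs"] by (auto simp: p_def)
  have colsL: "cols ! (?L - 1) = rim_d A b xs S" by (simp add: cols_def nth_append)
  have colsV: "cols ! i \<in> set (rim_V l xs)" if "i < ?L - 1" for i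
    using that by (simp add: cols_def nth_append)
  have cond: "cols ! i \<bullet> q = (if i = ?L - 1 then ?\<gamma> else 0)"
    if "i < ?L" and "\<forall>u\<in>set cols. (xstar - last xs - q) \<bullet> u = 0" for i q
  proof -
    have "cols ! i \<in> set cols" using \<open>i < ?L\<close> by simp
    then have h: "(xstar - last xs - q) \<bullet> cols ! i = 0" using that(2) by blast
    have h2: "xstar \<bullet> cols ! i - last xs \<bullet> cols ! i - q \<bullet> cols ! i = 0"
      using h by (simp only: inner_diff_left)
    have "cols ! i \<bullet> q = cols ! i \<bullet> (xstar - last xs)"
      using h2 by (simp only: inner_diff_right inner_commute[of "cols ! i"])
    also have "\<dots> = - (cols ! i \<bullet> ?e)" by (simp add: inner_diff_right)
    also have "\<dots> = (if i = ?L - 1 then ?\<gamma> else 0)"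
    proof (cases "i = ?L - 1")
      case True then show ?thesis using d_e[OF ne, of S] colsL by (simp add: inner_commute)
    next
      case False
      then have "i < ?L - 1" using \<open>i < ?L\<close> by simp
      then have "cols ! i \<in> set (rim_V l xs)" by (rule colsV)
      then show ?thesis using I False by (simp add: rinv_def)
    qed
    finally show ?thesis .
  qed
  obtain s0 where s0: "p = (\<Sum>j<?L. s0 j *\<^sub>R cols ! j)" using span_list[OF P(1)] by blast
  have ex: "\<forall>i<?L. cols ! i \<bullet> (\<Sum>j<?L. s0 j *\<^sub>R cols ! j) = (if i = ?L - 1 then ?\<gamma> else 0)"
  proof (intro allI impI)
    fix i assume "i < ?L"
    have "\<forall>u\<in>set cols. (xstar - last xs - p) \<bullet> u = 0" using P(2) by (simp add: span_base)
    from cond[OF \<open>i < ?L\<close> this] show "cols ! i \<bullet> (\<Sum>j<?L. s0 j *\<^sub>R cols ! j) = (if i = ?L - 1 then ?\<gamma> else 0)"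
      by (simp only: s0[symmetric])
  qed
  define s where "s = (SOME s :: nat \<Rightarrow> real. \<forall>i<?L.
                 cols ! i \<bullet> (\<Sum>j<?L. scaleR (s j) (cols ! j)) = (if i = ?L - 1 then ?\<gamma> else 0))"
  have sP: "\<forall>i<?L. cols ! i \<bullet> (\<Sum>j<?L. s j *\<^sub>R cols ! j) = (if i = ?L - 1 then ?\<gamma> else 0)"
    unfolding s_def by (rule someI[of _ s0]) (rule ex)
  define m where "m = (\<Sum>j<?L. s j *\<^sub>R cols ! j)"
  have "m - p \<in> span (set cols)" using P(1) sum_list_in_span[of s cols] by (simp add: m_def span_diff)
  moreover have "orthogonal (m - p) u" if "u \<in> set cols" for u
  proof -
    obtain i where i: "i < ?L" "u = cols ! i" using \<open>u \<in> set cols\<close> by (auto simp: in_set_conv_nth)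
    have um: "u \<bullet> m = (if i = ?L - 1 then ?\<gamma> else 0)" using sP i by (simp add: m_def)
    have "\<forall>u\<in>set cols. (xstar - last xs - p) \<bullet> u = 0" using P(2) by (simp add: span_base)
    then have up: "u \<bullet> p = (if i = ?L - 1 then ?\<gamma> else 0)" using cond[OF i(1), of p] i(2) by simp
    have "u \<bullet> (m - p) = 0" unfolding inner_diff_right um up by simp
    then show ?thesis unfolding orthogonal_def by (simp add: inner_commute)
  qed
  ultimately have "orthogonal (m - p) (m - p)" by (meson orthogonal_to_span orthogonal_commute)
  then have "m = p" by (metis orthogonal_self right_minus_eq)
  have "rim_step A b l xs S = last xs + m"
    unfolding rim_step_def Let_def m_def s_def cols_def by (rule refl)
  then show ?thesis using \<open>m = p\<close> by simp
qed

lemma step_common: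
  assumes I: "rinv xs" and S: "transpose S *v (A *v last xs - b) \<noteq> 0"
  defines "cols \<equiv> rim_V l xs @ [rim_d A b xs S]"
  defines "p \<equiv> proj_span (set cols) (xstar - last xs)"
  shows "rim_step A b l xs S - xstar = (last xs - xstar) + p"
    and "p \<in> span (set cols)"
    and "\<forall>u\<in>span (set cols). ((last xs - xstar) + p) \<bullet> u = 0"
proof -
  show "rim_step A b l xs S - xstar = (last xs - xstar) + p"
    using step_eq[OF I S] by (simp add: p_def cols_def)
  have P: "p \<in> span (set cols)" "\<forall>u\<in>span (set cols). (xstar - last xs - p) \<bullet> u = 0"
    using proj_span_props[of "set cols" "xstar - last xs"] by (auto simp: p_def)
  show "p \<in> span (set cols)" by (rule P(1))
  show "\<forall>u\<in>span (set cols). ((last xs - xstar) + p) \<bullet> u = 0"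
  proof
    fix u assume "u \<in> span (set cols)"
    then have "(xstar - last xs - p) \<bullet> u = 0" using P(2) by blast
    moreover have "(last xs - xstar) + p = - (xstar - last xs - p)" by simp
    ultimately show "((last xs - xstar) + p) \<bullet> u = 0" by (simp only: inner_minus_left)
  qed
qed

lemma step_rinv:
  assumes I: "rinv xs" and S: "transpose S *v (A *v last xs - b) \<noteq> 0"
  shows "rinv (xs @ [rim_step A b l xs S])"
proof -
  define cols where "cols = rim_V l xs @ [rim_d A b xs S]"
  define p where "p = proj_span (set cols) (xstar - last xs)"
  define x' where "x' = rim_step A b l xs S"
  have ne: "xs \<noteq> []" using I by (simp add: rinv_def)
  note C = step_common[OF I S, folded cols_def, folded p_def, folded x'_def]
  define n where "n = length xs"
  have n1: "n \<ge> 1" using ne by (simp add: n_def Suc_le_eq)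
  have lastx: "last xs = xs ! (n - 1)" using ne by (simp add: n_def last_conv_nth)
  have pr: "rng A p" by (rule rng_span[OF cols_rng[OF I, of S] C(2)[unfolded cols_def]])
  have er: "rng A (last xs - xstar)" using I ne lastx n1 by (auto simp: rinv_def n_def)
  have R1: "\<forall>i<length (xs @ [x']). rng A ((xs @ [x']) ! i - xstar)"
  proof (intro allI impI)
    fix i assume "i < length (xs @ [x'])"
    then consider "i < n" | "i = n" by (auto simp: n_def less_Suc_eq)
    then show "rng A ((xs @ [x']) ! i - xstar)"
    proof cases
      case 1 then show ?thesis using I by (simp add: nth_append rinv_def n_def)
    next
      case 2
      have "(xs @ [x']) ! i - xstar = (last xs - xstar) + p" using C(1) 2 by (simp add: n_def)
      then show ?thesis using rng_add[OF er pr] by (simp only:)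
    qed
  qed
  have R2: "\<forall>v\<in>set (rim_V l (xs @ [x'])). v \<bullet> (last (xs @ [x']) - xstar) = 0"
  proof
    fix v assume "v \<in> set (rim_V l (xs @ [x']))"
    then obtain i where i: "Suc n - l \<le> i" "i < n" and v: "v = xs ! i - x'"
      by (auto simp: rim_V_eq n_def nth_append)
    have "xs ! i - last xs \<in> span (set cols)"
    proof (cases "i = n - 1")
      case True then show ?thesis using lastx by (simp add: span_0)
    next
      case False
      then have "i < n - 1" using i by simp
      moreover have "Suc (n - 1) - l \<le> i" using i n1 by simp
      ultimately have "xs ! i - last xs \<in> set (rim_V l xs)"
        using ne by (auto simp: rim_V_eq n_def)
      then show ?thesis by (simp add: cols_def span_base)
    qed
    then have "v \<in> span (set cols)" using C(2) C(1) v
      by (metis (no_types, lifting) add_diff_cancel_left' diff_diff_eq2 diff_add_cancel span_diff)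
    then have "((last xs - xstar) + p) \<bullet> v = 0" using C(3) by blast
    moreover have "last (xs @ [x']) - xstar = (last xs - xstar) + p" using C(1) by simp
    ultimately show "v \<bullet> (last (xs @ [x']) - xstar) = 0" by (simp only: inner_commute)
  qed
  show ?thesis unfolding x'_def[symmetric] using R1 R2 by (simp add: rinv_def)
qed

lemma step_bound:
  assumes I: "rinv xs" and S: "transpose S *v (A *v last xs - b) \<noteq> 0"
  defines "d \<equiv> rim_d A b xs S"
  defines "PV \<equiv> proj_span (set (rim_V l xs)) d"
  defines "\<gamma> \<equiv> (norm (transpose S *v (A *v last xs - b)))^2"
  shows "(norm (rim_step A b l xs S - xstar))^2
           \<le> (norm (last xs - xstar))^2 - inverse (1 - (norm PV)^2 / (norm d)^2) * (\<gamma>^2 / (norm d)^2)"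
    and "1 \<le> inverse (1 - (norm PV)^2 / (norm d)^2)"
    and "(norm d)^2 > 0"
proof -
  define cols where "cols = rim_V l xs @ [rim_d A b xs S]"
  define p where "p = proj_span (set cols) (xstar - last xs)"
  define e where "e = last xs - xstar"
  have ne: "xs \<noteq> []" using I by (simp add: rinv_def)
  note C = step_common[OF I S, folded cols_def, folded p_def, folded e_def]
  have gp: "\<gamma> > 0" using S by (simp add: \<gamma>_def)
  have de: "d \<bullet> e = - \<gamma>" using d_e[OF ne, of S] by (simp add: d_def e_def \<gamma>_def)
  have PVp: "PV \<in> span (set (rim_V l xs))" "\<forall>u\<in>span (set (rim_V l xs)). (d - PV) \<bullet> u = 0"
    using proj_span_props[of "set (rim_V l xs)" d] by (auto simp: PV_def)
  define d' where "d' = d - PV"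
  have spV: "span (set (rim_V l xs)) \<subseteq> span (set cols)" by (intro span_mono) (auto simp: cols_def)
  have dc: "d \<in> span (set cols)" by (simp add: cols_def d_def span_base)
  have d'c: "d' \<in> span (set cols)" using dc PVp(1) spV by (auto simp: d'_def intro: span_diff)
  have eV: "e \<bullet> u = 0" if "u \<in> span (set (rim_V l xs))" for u
  proof -
    have "orthogonal e v" if "v \<in> set (rim_V l xs)" for v
      using I that by (auto simp: rinv_def orthogonal_def e_def inner_commute)
    then have "orthogonal e u" using orthogonal_to_span[OF \<open>u \<in> _\<close>] by blast
    then show ?thesis by (simp add: orthogonal_def)
  qed
  have ePV: "e \<bullet> PV = 0" by (rule eV[OF PVp(1)])
  have d'PV: "d' \<bullet> PV = 0" using PVp by (simp add: d'_def)
  have pd': "p \<bullet> d' = \<gamma>"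
  proof -
    have "(e + p) \<bullet> d' = 0" using C(3) d'c by blast
    then have "p \<bullet> d' = - (e \<bullet> d')" by (simp add: inner_add_left)
    also have "e \<bullet> d' = e \<bullet> d - e \<bullet> PV" by (simp add: d'_def inner_diff_right)
    finally show ?thesis using de ePV by (simp add: inner_commute)
  qed
  have nd: "d \<bullet> d = PV \<bullet> PV + d' \<bullet> d'"
  proof -
    have "d = PV + d'" by (simp add: d'_def)
    then have "d \<bullet> d = (PV + d') \<bullet> (PV + d')" by simp
    also have "\<dots> = PV \<bullet> PV + 2 * (d' \<bullet> PV) + d' \<bullet> d'"
      by (simp add: inner_add_left inner_add_right inner_commute)
    finally show ?thesis using d'PV by simp
  qed
  have CS: "\<gamma>^2 \<le> (p \<bullet> p) * (d' \<bullet> d')" using Cauchy_Schwarz_ineq[of p d'] pd' by simp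
  have d'pos: "d' \<bullet> d' > 0"
  proof (rule ccontr)
    assume "\<not> d' \<bullet> d' > 0"
    then have "d' \<bullet> d' = 0" using inner_ge_zero[of d'] by linarith
    then have "\<gamma>^2 \<le> 0" using CS by simp
    then show False using gp by (simp add: power2_eq_square mult_le_0_iff)
  qed
  have PVnn: "PV \<bullet> PV \<ge> 0" by simp
  have dpos: "d \<bullet> d > 0" using nd d'pos PVnn by linarith
  show "(norm d)^2 > 0" using dpos by (simp add: power2_norm_eq_inner)
  have q_eq: "inverse (1 - (norm PV)^2 / (norm d)^2) = (d \<bullet> d) / (d' \<bullet> d')"
  proof -
    have "1 - (norm PV)^2 / (norm d)^2 = (d' \<bullet> d') / (d \<bullet> d)"
      using dpos nd by (simp add: power2_norm_eq_inner field_simps)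
    then show ?thesis by simp
  qed
  show "1 \<le> inverse (1 - (norm PV)^2 / (norm d)^2)"
    unfolding q_eq using nd d'pos PVnn by simp
  have pp: "p \<bullet> p \<ge> \<gamma>^2 / (d' \<bullet> d')" using CS d'pos by (simp add: divide_le_eq mult.commute)
  have "(norm (rim_step A b l xs S - xstar))^2 = (e + p) \<bullet> (e + p)"
    unfolding C(1) by (simp only: power2_norm_eq_inner e_def)
  also have "\<dots> = e \<bullet> e - p \<bullet> p"
  proof -
    have "(e + p) \<bullet> p = 0" using C(3) C(2) by blast
    then show ?thesis by (simp add: inner_add_left inner_add_right inner_commute algebra_simps)
  qed
  also have "\<dots> \<le> e \<bullet> e - \<gamma>^2 / (d' \<bullet> d')" using pp by simp
  also have "\<gamma>^2 / (d' \<bullet> d') = inverse (1 - (norm PV)^2 / (norm d)^2) * (\<gamma>^2 / (norm d)^2)"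
    unfolding q_eq using dpos by (simp add: power2_norm_eq_inner field_simps)
  finally show "(norm (rim_step A b l xs S - xstar))^2
           \<le> (norm (last xs - xstar))^2 - inverse (1 - (norm PV)^2 / (norm d)^2) * (\<gamma>^2 / (norm d)^2)"
    by (simp add: power2_norm_eq_inner e_def)
qed

lemma hist_rinv:
  assumes "rng A x0"
    and "\<forall>i<k. transpose (Ss i) *v (A *v last (rim_hist A b l x0 Ss i) - b) \<noteq> 0"
  shows "rinv (rim_hist A b l x0 Ss k)"
  using assms(2)
proof (induction k)
  case 0 then show ?case using rinv_init[OF assms(1)] by simp
next
  case (Suc k)
  then have I: "rinv (rim_hist A b l x0 Ss k)" by simp
  have "transpose (Ss k) *v (A *v last (rim_hist A b l x0 Ss k) - b) \<noteq> 0" using Suc.prems by simp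
  from step_rinv[OF I this] show ?case by (simp add: Let_def)
qed

end

lemma g_bound:
  fixes A :: "real^'n^'m" and S :: "real^'q^'m"
  assumes dpos: "(norm (rim_d A b xs S))^2 > 0"
  shows "(norm (transpose S *v (A *v last xs - b)))^2 * (1 / (spec_norm (transpose S ** A))^2)
         \<le> ((norm (transpose S *v (A *v last xs - b)))^2)^2 / (norm (rim_d A b xs S))^2"
proof -
  define w where "w = transpose S *v (A *v last xs - b)"
  define N where "N = spec_norm (transpose S ** A)"
  define D where "D = (norm (rim_d A b xs S))^2"
  define g where "g = (norm w)^2"
  have tB: "transpose (transpose S ** A) *v w = transpose A *v (S *v w)"
    by (simp only: matrix_transpose_mul transpose_transpose matrix_vector_mul_assoc)
  have "norm (rim_d A b xs S) = norm (transpose A *v (S *v w))"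
    by (simp add: rim_d_def w_def del: transpose_matrix_vector)
  also have "\<dots> \<le> N * norm w"
    using norm_transpose_le[of "transpose S ** A" w] unfolding tB N_def spec_norm_def .
  finally have nd: "norm (rim_d A b xs S) \<le> N * norm w" .
  have N0: "N \<ge> 0" unfolding N_def spec_norm_def by (rule onorm_pos_le) simp
  have Dle: "D \<le> N^2 * g"
  proof -
    have "D \<le> (N * norm w)^2" unfolding D_def by (rule power_mono[OF nd norm_ge_zero])
    then show ?thesis by (simp add: g_def power_mult_distrib)
  qed
  have Dp: "D > 0" using dpos by (simp add: D_def)
  have g0: "g \<ge> 0" by (simp add: g_def)
  show ?thesis
    unfolding w_def[symmetric] N_def[symmetric] D_def[symmetric] g_def[symmetric]
  proof (cases "N = 0")
    case True then show "g * (1 / N\<^sup>2) \<le> g\<^sup>2 / D" using Dp g0 by simp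
  next
    case False
    then have Np: "N^2 > 0" using N0 by simp
    have "g * D \<le> g * (N^2 * g)" using Dle g0 by (rule mult_left_mono)
    then have "g * D \<le> g^2 * N^2" by (simp add: power2_eq_square algebra_simps)
    then show "g * (1 / N\<^sup>2) \<le> g\<^sup>2 / D" using Np Dp by (simp add: field_simps)
  qed
qed


(* ---- part L5 ---- *)

lemma lin_tv: "linear (\<lambda>S::real^'q^'m. transpose S *v r)"
  by (simp add: linear_iff vec_eq_iff vector_matrix_mult_def sum.distrib sum_distrib_left algebra_simps)

lemma meas_tv:
  assumes "(\<lambda>S. S) \<in> borel_measurable M"
  shows "(\<lambda>S::real^'q^'m. transpose S *v r) \<in> borel_measurable M"
proof -
  have bl: "bounded_linear (\<lambda>S::real^'q^'m. transpose S *v r)"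
    using lin_tv[of r] linear_conv_bounded_linear by blast
  have "continuous_on UNIV (\<lambda>S::real^'q^'m. transpose S *v r)"
    by (rule linear_continuous_on[OF bl])
  then have "(\<lambda>S::real^'q^'m. transpose S *v r) \<in> borel_measurable borel"
    by (rule borel_measurable_continuous_onI)
  from measurable_compose[OF assms this] show ?thesis by simp
qed

lemma bl_bil: "bounded_linear (\<lambda>X::real^'m^'m. (X *v x) \<bullet> y)"
proof -
  have "linear (\<lambda>X::real^'m^'m. (X *v x) \<bullet> y)"
    by (simp add: linear_iff matrix_vector_mult_add_rdistrib inner_add_left scaleR_matrix_vector_assoc[symmetric])
  then show ?thesis by (simp add: linear_conv_bounded_linear)
qed

lemma bil_int:
  fixes F :: "'a \<Rightarrow> real^'m^'m"
  assumes "integrable M F"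
  shows "integrable M (\<lambda>S. (F S *v x) \<bullet> y)" "(integral\<^sup>L M F *v x) \<bullet> y = (\<integral>S. (F S *v x) \<bullet> y \<partial>M)"
  using integrable_bounded_linear[OF bl_bil assms] integral_bounded_linear[OF bl_bil assms] by auto

lemma quadSS: "((S ** transpose S) *v x) \<bullet> y = (transpose S *v x) \<bullet> (transpose S *v (y::real^'m))"
  for S :: "real^'q^'m"
proof -
  have "((S ** transpose S) *v x) \<bullet> y = (transpose (transpose S) *v (transpose S *v x)) \<bullet> y"
    by (simp only: transpose_transpose matrix_vector_mul_assoc)
  also have "\<dots> = (transpose S *v x) \<bullet> (transpose S *v y)" by (rule adj)
  finally show ?thesis .
qed

context
  fixes M :: "(real^'q^'m) measure" and A :: "real^'n^'m"
  assumes P: "prob_space M" and meas: "(\<lambda>S. S) \<in> borel_measurable M"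
    and iSS: "integrable M (\<lambda>S. S ** transpose S)"
    and pd: "pos_def_mat (integral\<^sup>L M (\<lambda>S. S ** transpose S))"
    and iF: "integrable M (\<lambda>S. scaleR (1 / (spec_norm (transpose S ** A))^2) (S ** transpose S))"
begin

definition cN :: "real^'q^'m \<Rightarrow> real" where "cN S = 1 / (spec_norm (transpose S ** A))^2"

lemma cN_nonneg: "cN S \<ge> 0" by (simp add: cN_def)

lemma H_bil:
  "integrable M (\<lambda>S. cN S * ((transpose S *v x) \<bullet> (transpose S *v y)))"
  "(Hmat M A *v x) \<bullet> y = (\<integral>S. cN S * ((transpose S *v x) \<bullet> (transpose S *v y)) \<partial>M)"
proof -
  have eq: "((scaleR (1 / (spec_norm (transpose S ** A))^2) (S ** transpose S)) *v x) \<bullet> y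
        = cN S * ((transpose S *v x) \<bullet> (transpose S *v y))" for S
    by (simp only: scaleR_matrix_vector_assoc[symmetric] inner_scaleR_left quadSS cN_def)
  show "integrable M (\<lambda>S. cN S * ((transpose S *v x) \<bullet> (transpose S *v y)))"
    using bil_int(1)[OF iF, of x y] unfolding eq .
  show "(Hmat M A *v x) \<bullet> y = (\<integral>S. cN S * ((transpose S *v x) \<bullet> (transpose S *v y)) \<partial>M)"
    using bil_int(2)[OF iF, of x y] unfolding eq Hmat_def .
qed

lemma E_bil:
  "integrable M (\<lambda>S. (transpose S *v x) \<bullet> (transpose S *v y))"
  "(integral\<^sup>L M (\<lambda>S. S ** transpose S) *v x) \<bullet> y = (\<integral>S. (transpose S *v x) \<bullet> (transpose S *v y) \<partial>M)"
  using bil_int[OF iSS, of x y] unfolding quadSS by auto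

lemma H_sym: "transpose (Hmat M A) = Hmat M A"
proof (rule sym_of_adj)
  fix x y
  have "(Hmat M A *v x) \<bullet> y = (Hmat M A *v y) \<bullet> x"
    unfolding H_bil(2) by (simp add: inner_commute)
  then show "(Hmat M A *v x) \<bullet> y = x \<bullet> (Hmat M A *v y)" by (simp add: inner_commute)
qed

lemma H_psd: "0 \<le> v \<bullet> (Hmat M A *v v)"
proof -
  have "v \<bullet> (Hmat M A *v v) = (\<integral>S. cN S * ((transpose S *v v) \<bullet> (transpose S *v v)) \<partial>M)"
    using H_bil(2)[of v v] by (simp add: inner_commute)
  also have "\<dots> \<ge> 0" by (rule integral_nonneg_AE) (simp add: cN_nonneg)
  finally show ?thesis .
qed

lemma E_zero:
  assumes "AE S in M. transpose S *v v = 0"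
  shows "v = 0"
proof (rule ccontr)
  assume "v \<noteq> 0"
  then have pos: "v \<bullet> (integral\<^sup>L M (\<lambda>S. S ** transpose S) *v v) > 0" using pd by (simp add: pos_def_mat_def)
  have "v \<bullet> (integral\<^sup>L M (\<lambda>S. S ** transpose S) *v v) = (\<integral>S. (transpose S *v v) \<bullet> (transpose S *v v) \<partial>M)"
    using E_bil(2)[of v v] by (simp add: inner_commute)
  also have "\<dots> = (\<integral>S. 0 \<partial>M)"
  proof (rule integral_cong_AE)
    show "(\<lambda>S. (transpose S *v v) \<bullet> (transpose S *v v)) \<in> borel_measurable M"
      using E_bil(1)[of v v] by (rule borel_measurable_integrable)
    show "(\<lambda>S. 0::real) \<in> borel_measurable M" by simp
    show "AE S in M. (transpose S *v v) \<bullet> (transpose S *v v) = 0" using assms by eventually_elim simp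
  qed
  finally show False using pos by simp
qed

lemma H_range:
  assumes v: "v = A *v u" and z: "v \<bullet> (Hmat M A *v v) = 0"
  shows "v = 0"
proof -
  let ?f = "\<lambda>S. cN S * ((transpose S *v v) \<bullet> (transpose S *v v))"
  have "integral\<^sup>L M ?f = 0" using H_bil(2)[of v v] z by (simp add: inner_commute)
  then have "AE S in M. ?f S = 0"
    using integral_nonneg_eq_0_iff_AE[OF H_bil(1)[of v v]] by (simp add: cN_nonneg)
  then have "AE S in M. transpose S *v v = 0"
  proof eventually_elim
    case (elim S)
    show ?case
    proof (cases "cN S = 0")
      case True
      then have "spec_norm (transpose S ** A) = 0" by (simp add: cN_def)
      then have "\<forall>x. (transpose S ** A) *v x = 0"
        unfolding spec_norm_def by (subst onorm_eq_0[symmetric]) simp_all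
      then show ?thesis using v by (simp add: matrix_vector_mul_assoc)
    next
      case False
      then show ?thesis using elim by simp
    qed
  qed
  then show ?thesis by (rule E_zero)
qed

lemma sigma_bound:
  assumes er: "rng A e"
  shows "(sigma_min (msqrt (Hmat M A) ** A))^2 * (e \<bullet> e) \<le> (A *v e) \<bullet> (Hmat M A *v (A *v e))"
proof -
  define H where "H = Hmat M A"
  define R where "R = msqrt H"
  have Hs: "transpose H = H" using H_sym by (simp add: H_def)
  have Hp: "\<forall>v. 0 \<le> v \<bullet> (H *v v)" using H_psd by (simp add: H_def)
  have RP: "transpose R = R" "R ** R = H" using msqrt_props[OF Hs Hp] by (auto simp: R_def)
  define G where "G = transpose (R ** A) ** (R ** A)"
  have Gv: "G *v v = transpose A *v (H *v (A *v v))" for v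
  proof -
    have "G = transpose A ** (R ** R) ** A" unfolding G_def
      by (simp only: matrix_transpose_mul RP(1) matrix_mul_assoc)
    then show ?thesis by (simp only: RP(2) matrix_vector_mul_assoc matrix_mul_assoc)
  qed
  have Gq: "v \<bullet> (G *v v) = (A *v v) \<bullet> (H *v (A *v v))" for v
    by (simp only: Gv adj2)
  have Gs: "transpose G = G"
  proof (rule sym_of_adj)
    fix x y
    have "(G *v x) \<bullet> y = (H *v (A *v x)) \<bullet> (A *v y)" by (simp only: Gv adj)
    also have "\<dots> = (A *v x) \<bullet> (H *v (A *v y))" by (rule sym_adj[OF Hs])
    also have "\<dots> = x \<bullet> (G *v y)" by (simp only: Gv adj2)
    finally show "(G *v x) \<bullet> y = x \<bullet> (G *v y)" .
  qed
  show ?thesis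
  proof (cases "e = 0")
    case True then show ?thesis by simp
  next
    case False
    obtain Bs where B: "onb G UNIV Bs" using spectral[OF Gs] by blast
    define lam where "lam b = b \<bullet> (G *v b)" for b
    have fin: "finite Bs" using B by (simp add: onb_def)
    have lam0: "lam b \<ge> 0" for b unfolding lam_def Gq using Hp by simp
    have eb0: "e \<bullet> b = 0" if "b \<in> Bs" "lam b = 0" for b
    proof -
      have "(A *v b) \<bullet> (H *v (A *v b)) = 0" using that(2) by (simp add: lam_def Gq)
      then have "A *v b = 0" using H_range[of "A *v b" b] by (simp add: H_def)
      obtain y where "e = transpose A *v y" using er by (auto simp: rng_def)
      then have "e \<bullet> b = y \<bullet> (A *v b)" by (simp only: adj)
      then show ?thesis using \<open>A *v b = 0\<close> by simp
    qed
    have eGe: "e \<bullet> (G *v e) = (\<Sum>b\<in>Bs. lam b * ((e \<bullet> b) * (e \<bullet> b)))"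
      by (simp add: onb_apply[OF B, of e] inner_sum_right lam_def algebra_simps)
    obtain b0 where b0: "b0 \<in> Bs" "e \<bullet> b0 \<noteq> 0"
    proof (rule ccontr)
      assume "\<not> thesis"
      then have "\<forall>b\<in>Bs. e \<bullet> b = 0" using that by blast
      then have "(\<Sum>b\<in>Bs. (e \<bullet> b) *\<^sub>R b) = 0" by simp
      then show False using onb_expand[OF B, of e] False by simp
    qed
    define Lam where "Lam = lam ` {b\<in>Bs. lam b > 0}"
    have Lfin: "finite Lam" using fin by (simp add: Lam_def)
    have "lam b0 > 0" using b0 eb0[of b0] lam0[of b0] by (cases "lam b0 = 0") auto
    then have Lne: "Lam \<noteq> {}" using b0 by (auto simp: Lam_def)
    define lm where "lm = Min Lam"
    have lmL: "lm \<in> Lam" using Lfin Lne by (simp add: lm_def)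
    then obtain bm where bm: "bm \<in> Bs" "lam bm = lm" "lm > 0" by (auto simp: Lam_def)
    have lmle: "lm \<le> lam b" if "b \<in> Bs" "lam b > 0" for b
      using Lfin that by (auto simp: lm_def Lam_def)
    have "lm * (e \<bullet> e) = (\<Sum>b\<in>Bs. lm * ((e \<bullet> b) * (e \<bullet> b)))"
      using onb_parseval[OF B, of e e] by (simp add: sum_distrib_left)
    also have "\<dots> \<le> (\<Sum>b\<in>Bs. lam b * ((e \<bullet> b) * (e \<bullet> b)))"
    proof (rule sum_mono)
      fix b assume bB: "b \<in> Bs"
      show "lm * ((e \<bullet> b) * (e \<bullet> b)) \<le> lam b * ((e \<bullet> b) * (e \<bullet> b))"
      proof (cases "lam b = 0")
        case True then show ?thesis using eb0[OF bB] by simp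
      next
        case False then have "lam b > 0" using lam0[of b] by simp
        then show ?thesis using lmle[OF bB] by (intro mult_right_mono) simp_all
      qed
    qed
    also have "\<dots> = (A *v e) \<bullet> (H *v (A *v e))" using eGe Gq by simp
    finally have main: "lm * (e \<bullet> e) \<le> (A *v e) \<bullet> (H *v (A *v e))" .
    define \<Sigma> where "\<Sigma> = {\<sigma>. \<sigma> > 0 \<and> (\<exists>v. v \<noteq> 0 \<and> (transpose (R ** A) ** (R ** A)) *v v = scaleR (\<sigma>^2) v)}"
    have sm: "sigma_min (R ** A) = Inf \<Sigma>" by (simp add: sigma_min_def \<Sigma>_def)
    have inS: "sqrt lm \<in> \<Sigma>"
    proof -
      have "bm \<noteq> 0" using B bm(1) by (auto simp: onb_def)
      moreover have "G *v bm = (sqrt lm)^2 *\<^sub>R bm"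
      proof -
        have "G *v bm = lam bm *\<^sub>R bm" using B bm(1) by (simp add: onb_def lam_def)
        then show ?thesis using bm(2,3) by simp
      qed
      ultimately show ?thesis unfolding \<Sigma>_def mem_Collect_eq G_def[symmetric]
        using bm(3) by (intro conjI exI[of _ bm]) simp_all
    qed
    have bdd: "bdd_below \<Sigma>" by (rule bdd_belowI[of _ 0]) (auto simp: \<Sigma>_def)
    have s1: "Inf \<Sigma> \<le> sqrt lm" by (rule cInf_lower[OF inS bdd])
    have Sne: "\<Sigma> \<noteq> {}" using inS by blast
    have s0: "0 \<le> Inf \<Sigma>" by (rule cInf_greatest[OF Sne]) (simp add: \<Sigma>_def)
    have "(Inf \<Sigma>)^2 \<le> (sqrt lm)^2" by (rule power_mono[OF s1 s0])
    then have "(sigma_min (R ** A))^2 \<le> lm" using bm(3) by (simp add: sm)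
    then have "(sigma_min (R ** A))^2 * (e \<bullet> e) \<le> lm * (e \<bullet> e)" by (rule mult_right_mono) simp
    with main show ?thesis by (simp add: R_def H_def)
  qed
qed

end


(* ---- part L6 ---- *)

theorem theorem3p2:
  fixes A :: "real^'n^'m" and b :: "real^'m" and M :: "(real^'q^'m) measure"
    and l :: nat and x0 :: "real^'n" and Ss :: "nat \<Rightarrow> real^'q^'m" and k :: nat
  assumes "prob_space M"
    and "(\<lambda>S. S) \<in> borel_measurable M"
    and "\<exists>x. A *v x = b"
    and "integrable M (\<lambda>S. S ** transpose S)"
    and "pos_def_mat (integral\<^sup>L M (\<lambda>S. S ** transpose S))"
    and "integrable M (\<lambda>S. scaleR (1 / (spec_norm (transpose S ** A))^2) (S ** transpose S))"
    and "l > 0"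
    and "\<exists>y. x0 = transpose A *v y"
    and "\<forall>i<k. Ss i \<in> space M \<and>
           transpose (Ss i) *v (A *v last (rim_hist A b l x0 Ss i) - b) \<noteq> 0"
  shows "(let xs = rim_hist A b l x0 Ss k; xk = last xs; Q = rim_Q M A b xk; xstar = pinv A *v b
          in (LINT S:Q|M. (norm (rim_step A b l xs S - xstar))^2) / measure M Q
             \<le> (1 - rim_q M A b l xs * (sigma_min (msqrt (Hmat M A) ** A))^2) * (norm (xk - xstar))^2)"
proof -
  note P = assms(1) and meas = assms(2) and cons = assms(3) and iSS = assms(4) and pd = assms(5)
    and iF = assms(6) and hyp = assms(9)
  note ctx = P meas iSS pd iF
  define xs where "xs = rim_hist A b l x0 Ss k"
  define xk where "xk = last xs"
  define Q where "Q = rim_Q M A b xk"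
  define xstar where "xstar = pinv A *v b"
  have Ax: "A *v xstar = b" using pinv_sol(1)[OF cons] by (simp add: xstar_def)
  have xr: "rng A xstar" using pinv_sol(2)[OF cons] by (simp add: xstar_def rng_def)
  have x0r: "rng A x0" using assms(8) by (simp add: rng_def)
  have I: "rinv A l xstar xs" unfolding xs_def
    by (rule hist_rinv[OF Ax xr x0r]) (use hyp in blast)
  have ne: "xs \<noteq> []" using I Ax xr by (simp add: rinv_def)
  define e where "e = xk - xstar"
  define r where "r = A *v xk - b"
  define E where "E = (norm e)^2"
  have er: "rng A e"
    using I Ax xr ne by (auto simp: rinv_def e_def xk_def last_conv_nth)
  have re: "r = A *v e" using Ax by (simp add: r_def e_def vec.diff)
  have E_ee: "E = e \<bullet> e" by (simp add: E_def power2_norm_eq_inner)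
  define g where "g S = (1 / (spec_norm (transpose S ** A))^2) * ((transpose S *v r) \<bullet> (transpose S *v r))" for S :: "real^'q^'m"
  define \<rho> where "\<rho> = (Hmat M A *v r) \<bullet> r"
  have g_eq: "g = (\<lambda>S. cN A S * ((transpose S *v r) \<bullet> (transpose S *v r)))"
    by (rule ext) (simp only: g_def cN_def[OF ctx])
  have g_int: "integrable M g" unfolding g_eq by (rule H_bil(1)[OF ctx])
  have g_integral: "integral\<^sup>L M g = \<rho>" unfolding g_eq \<rho>_def by (rule H_bil(2)[OF ctx, symmetric])
  have g_nn: "g S \<ge> 0" for S by (simp add: g_def)
  have \<rho>_nn: "\<rho> \<ge> 0" using H_psd[OF ctx, of r] by (simp add: \<rho>_def inner_commute)
  define \<sigma> where "\<sigma> = sigma_min (msqrt (Hmat M A) ** A)"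
  have sig: "\<sigma>^2 * E \<le> \<rho>"
    using sigma_bound[OF ctx er] by (simp add: \<sigma>_def E_ee \<rho>_def re inner_commute)
  have Qdef: "Q = {S \<in> space M. transpose S *v r \<noteq> 0}" by (simp add: Q_def rim_Q_def r_def)
  have Qsets: "Q \<in> sets M"
  proof -
    have "(\<lambda>S. transpose S *v r) -` (- {0}) \<inter> space M \<in> sets M"
      by (rule measurable_sets[OF meas_tv[OF meas]]) simp
    moreover have "(\<lambda>S. transpose S *v r) -` (- {0}) \<inter> space M = Q" by (auto simp: Qdef)
    ultimately show ?thesis by simp
  qed
  define LHS where "LHS = (LINT S:Q|M. (norm (rim_step A b l xs S - xstar))^2) / measure M Q"
  define q where "q = rim_q M A b l xs"
  have goal: "LHS \<le> (1 - q * \<sigma>^2) * E"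
  proof (cases "Q = {}")
    case True
    have "AE S in M. transpose S *v r = 0" using True by (intro AE_I2) (auto simp: Qdef)
    then have "r = 0" by (rule E_zero[OF ctx])
    obtain y where y: "e = transpose A *v y" using er by (auto simp: rng_def)
    have "e \<bullet> e = y \<bullet> (A *v e)" unfolding y by (rule adj)
    then have "E = 0" using \<open>r = 0\<close> re E_ee by simp
    then show ?thesis using True by (simp add: LHS_def)
  next
    case False
    define f where "f S = (norm (rim_step A b l xs S - xstar))^2" for S :: "real^'q^'m"
    define qS where "qS S = inverse (1 - (norm (proj_span (set (rim_V l xs)) (rim_d A b xs S)))^2
                                   / (norm (rim_d A b xs S))^2)" for S :: "real^'q^'m"
    have q_eq: "q = Inf (qS ` Q)" by (simp add: q_def rim_q_def qS_def Q_def xk_def)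
    have SQ: "transpose S *v (A *v last xs - b) \<noteq> 0" if "S \<in> Q" for S
      using that by (simp add: Qdef r_def xk_def)
    have qS1: "1 \<le> qS S" if "S \<in> Q" for S
      using step_bound(2)[OF Ax xr I SQ[OF that]] by (simp add: qS_def)
    have bddQ: "bdd_below (qS ` Q)" using qS1 by (intro bdd_belowI[of _ 1]) auto
    have q1: "1 \<le> q" unfolding q_eq using False qS1 by (intro cInf_greatest) auto
    have qle: "q \<le> qS S" if "S \<in> Q" for S unfolding q_eq by (rule cInf_lower[OF _ bddQ]) (use that in blast)
    have fb: "f S \<le> E - q * g S" if "S \<in> Q" for S
    proof -
      let ?\<gamma> = "(norm (transpose S *v (A *v last xs - b)))^2"
      let ?D = "(norm (rim_d A b xs S))^2"
      have D0: "?D > 0" using step_bound(3)[OF Ax xr I SQ[OF that]] .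
      have gS: "g S = ?\<gamma> * (1 / (spec_norm (transpose S ** A))^2)"
        by (simp add: g_def r_def xk_def power2_norm_eq_inner)
      have "g S \<le> ?\<gamma>^2 / ?D" unfolding gS by (rule g_bound[OF D0])
      moreover have "0 \<le> q" using q1 by simp
      ultimately have "q * g S \<le> qS S * (?\<gamma>^2 / ?D)"
        using qle[OF that] g_nn[of S] by (intro mult_mono) simp_all
      moreover have "f S \<le> E - qS S * (?\<gamma>^2 / ?D)"
        using step_bound(1)[OF Ax xr I SQ[OF that]] by (simp add: f_def qS_def E_def e_def xk_def)
      ultimately show ?thesis by linarith
    qed
    have f_nn: "f S \<ge> 0" for S by (simp add: f_def)
    have qgE: "q * g S \<le> E" if "S \<in> space M" for S
    proof (cases "S \<in> Q")
      case True then show ?thesis using fb[OF True] f_nn[of S] by linarith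
    next
      case False
      then have "transpose S *v r = 0" using that by (simp add: Qdef)
      then show ?thesis by (simp add: g_def E_def)
    qed
    have mspace: "measure M (space M) = 1" using P by (simp add: prob_space.prob_space)
    have q\<rho>: "q * \<rho> \<le> E"
    proof -
      have "q * \<rho> = (\<integral>S. q * g S \<partial>M)" using g_integral by simp
      also have "\<dots> \<le> (\<integral>S. E \<partial>M)"
        using g_int P qgE by (intro integral_mono) (auto simp: prob_space.finite_measure finite_measure.integrable_const)
      also have "\<dots> = E" using mspace by simp
      finally show ?thesis .
    qed
    have q0: "q \<ge> 0" using q1 by simp
    have rhs: "E - q * \<rho> \<le> (1 - q * \<sigma>^2) * E"
    proof -
      have "q * (\<sigma>^2 * E) \<le> q * \<rho>" using sig q0 by (rule mult_left_mono)
      then show ?thesis by (simp add: algebra_simps)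
    qed
    have rhs0: "0 \<le> (1 - q * \<sigma>^2) * E" using rhs q\<rho> by linarith
    show ?thesis
    proof (cases "set_integrable M Q f \<and> measure M Q > 0")
      case False
      then have "\<not> set_integrable M Q f \<or> measure M Q = 0" using measure_nonneg[of M Q] by linarith
      then have "LHS = 0"
      proof
        assume "\<not> set_integrable M Q f"
        then have "(LINT S:Q|M. f S) = 0" by (simp add: set_lebesgue_integral_def set_integrable_def not_integrable_integral_eq)
        then show "LHS = 0" by (simp add: LHS_def f_def)
      next
        assume "measure M Q = 0" then show "LHS = 0" by (simp add: LHS_def)
      qed
      then show ?thesis using rhs0 by simp
    next
      case True
      then have si: "set_integrable M Q f" and \<mu>p: "measure M Q > 0" by auto
      have \<mu>1: "measure M Q \<le> 1" using P by (simp add: prob_space.prob_le_1)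
      have int2: "integrable M (\<lambda>S. indicator Q S *\<^sub>R (E - q * g S))"
        using g_int P by (intro integrable_mult_indicator[OF Qsets])
          (auto simp: prob_space.finite_measure finite_measure.integrable_const)
      have "(LINT S:Q|M. f S) \<le> (\<integral>S. indicator Q S *\<^sub>R (E - q * g S) \<partial>M)"
        unfolding set_lebesgue_integral_def
        using si fb int2 by (intro integral_mono) (auto simp: set_integrable_def indicator_def)
      also have "\<dots> = (\<integral>S. E * indicator Q S - q * g S \<partial>M)"
      proof (rule Bochner_Integration.integral_cong[OF refl])
        fix S assume "S \<in> space M"
        then show "indicator Q S *\<^sub>R (E - q * g S) = E * indicator Q S - q * g S"
          by (cases "S \<in> Q") (auto simp: Qdef g_def)
      qed
      also have "\<dots> = E * measure M Q - q * \<rho>"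
      proof -
        have "emeasure M Q < \<infinity>"
          using finite_measure.emeasure_finite[OF prob_space.finite_measure[OF P], of Q]
          by (simp add: less_top[symmetric])
        then have "integrable M (indicat_real Q)" by (rule integrable_real_indicator[OF Qsets])
        then have i1: "integrable M (\<lambda>S. E * indicator Q S)" by (rule integrable_mult_right)
        have i2: "integrable M (\<lambda>S. q * g S)" using g_int by simp
        have "(\<integral>S. E * indicator Q S - q * g S \<partial>M) = (\<integral>S. E * indicator Q S \<partial>M) - (\<integral>S. q * g S \<partial>M)"
          by (rule Bochner_Integration.integral_diff[OF i1 i2])
        also have "(\<integral>S. E * indicator Q S \<partial>M) = E * measure M Q"
          using Qsets by (simp add: sets.Int_space_eq2)
        also have "(\<integral>S. q * g S \<partial>M) = q * \<rho>" using g_integral by simp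
        finally show ?thesis .
      qed
      finally have "(LINT S:Q|M. f S) \<le> E * measure M Q - q * \<rho>" .
      then have "LHS \<le> (E * measure M Q - q * \<rho>) / measure M Q"
        unfolding LHS_def f_def using \<mu>p by (simp add: divide_right_mono)
      also have "\<dots> = E - q * \<rho> / measure M Q" using \<mu>p by (simp add: field_simps)
      also have "\<dots> \<le> E - q * \<rho>"
      proof -
        have "q * \<rho> \<le> q * \<rho> / measure M Q"
          using \<mu>p \<mu>1 q0 \<rho>_nn by (simp add: le_divide_eq mult_left_le)
        then show ?thesis by simp
      qed
      finally show ?thesis using rhs by linarith
    qed
  qed
  then show ?thesis
    by (simp add: Let_def LHS_def q_def \<sigma>_def E_def e_def xs_def xk_def Q_def xstar_def)
qed


end
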